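(* Let $X=\{x_0,\ldots,x_m\}$, $X'=\{x'_0,\ldots,x'_q\}$, $c\in\mathbb{R}^q\langle\langle X\rangle\rangle$ and $d\in\mathbb{R}^m\langle\langle X'\rangle\rangle$ purely improper. Consider the closed-loop system in which the Chen-Fliess series $F_c$ is in multiplicative output feedback with $F_d$: $y=F_c[u]$, $u=v\cdot F_d[y]$ (componentwise product), with external input $v$. Then the closed-loop system is (formally) a Chen-Fliess series $y=F_e[v]$ whose generating series is the multiplicative dynamic feedback product $e=c\,\check{@}\,d:=c\,\tilde\circ\,\delta_{(d^{\sqcup\!\sqcup-1}\circ c)^{\circ-1}}$.
   Context: For $c\in\mathbb{R}^\ell\langle\langle X\rangle\rangle$, the Chen-Fliess series is $F_c[u](t)=\sum_{\eta\in X^\ast}(c,\eta)E_\eta[u](t,t_0)$ with $E_\emptyset=1$, $E_{x_i\bar\eta}[u](t,t_0)=\int_{t_0}^tu_i(\tau)E_{\bar\eta}[u](\tau,t_0)d\tau$, $u_0=1$ (understood formally, without convergence assumptions). Series notation: coefficients in $\mathbb{R}^\ell$, componentwise products, purely improper means every component has nonzero constant term. Shuffle product $\sqcup\!\sqcup$: bilinear, $(x_i\eta)\sqcup\!\sqcup(x_j\xi)=x_i(\eta\sqcup\!\sqcup x_j\xi)+x_j(x_i\eta\sqcup\!\sqcup\xi)$, $\eta\sqcup\!\sqcup\emptyset=\emptyset\sqcup\!\sqcup\eta=\eta$; $d^{\sqcup\!\sqcup-1}$ is the componentwise shuffle inverse. Composition product: for $c\in\mathbb{R}^k\langle\langle X'\rangle\rangle$,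 $X'=\{x'_0,\ldots,x'_\ell\}$, $e\in\mathbb{R}^\ell\langle\langle X\rangle\rangle$, $c\circ e=\sum_{\eta\in X'^\ast}(c,\eta)\psi_e(\eta)(\mathbf 1)$ with $\mathbf 1=1\emptyset$, $\psi_e(x'_i)(w)=x_0(e_i\sqcup\!\sqcup w)$, $e_0:=\mathbf 1$, $\psi_e$ multiplicative (concatenation to composition); $F_{c\circ e}=F_c\circ F_e$. Multiplicative mixed composition: $c\,\tilde\circ\,\delta_g=\sum_{\eta}(c,\eta)\bar\phi_g(\eta)(\mathbf 1)$ with $\bar\phi_g(x_0)(w)=x_0w$, $\bar\phi_g(x_i)(w)=x_i(g_i\sqcup\!\sqcup w)$ ($i\ge1$), multiplicative; $F_{c\,\tilde\circ\,\delta_g}[v]=F_c[v\cdot F_g[v]]$. For purely improper $g\in\mathbb{R}^m\langle\langle X\rangle\rangle$, $g^{\circ-1}$ is the unique $h\in\mathbb{R}^m\langle\langle X\rangle\rangle$ with $h=g^{\sqcup\!\sqcup-1}\,\tilde\circ\,\delta_h$. *)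

theory Defs
  imports "HOL-Computational_Algebra.Formal_Power_Series"
begin

text \<open>Words over an alphabet X = {x_0,...,x_n} are lists of letter indices (nat list).
A scalar formal series is a map from words to real coefficients; an R^l-valued series
is a map from a component index to a scalar series, components indexed 1..l.\<close>

type_synonym ser = "nat list \<Rightarrow> real"
type_synonym vser = "nat \<Rightarrow> ser"

definition series_on :: "nat \<Rightarrow> nat \<Rightarrow> vser \<Rightarrow> bool" where
  "series_on n l c \<longleftrightarrow> (\<forall>i w. c i w \<noteq> 0 \<longrightarrow> i \<in> {1..l} \<and> set w \<subseteq> {0..n})"

definition purely_improper :: "nat \<Rightarrow> vser \<Rightarrow> bool" where
  "purely_improper l c \<longleftrightarrow> (\<forall>i\<in>{1..l}. c i [] \<noteq> 0)"

definition one_ser :: ser where "one_ser w = (if w = [] then 1 else 0)"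

definition word_ser :: "nat list \<Rightarrow> ser" where "word_ser u w = (if w = u then 1 else 0)"

definition prefix_ser :: "nat \<Rightarrow> ser \<Rightarrow> ser" where
  "prefix_ser a s w = (case w of [] \<Rightarrow> 0 | b # w' \<Rightarrow> (if b = a then s w' else 0))"

fun sh_word :: "nat list \<Rightarrow> nat list \<Rightarrow> ser" where
  "sh_word [] v = word_ser v"
| "sh_word (a # u) [] = word_ser (a # u)"
| "sh_word (a # u) (b # v) =
     (\<lambda>w. prefix_ser a (sh_word u (b # v)) w + prefix_ser b (sh_word (a # u) v) w)"

text \<open>bilinear extension to series (locally finite: only words u,v with
|u|+|v|=|w| and letters in w can contribute to the coefficient of w)\<close>
definition shuffle :: "ser \<Rightarrow> ser \<Rightarrow> ser" where
  "shuffle s t w = (\<Sum>(u,v)\<in>{(u,v). length u + length v = length w \<and> set u \<subseteq> set w \<and> set v \<subseteq> set w}.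
                      s u * t v * sh_word u v w)"

definition shuffle_inv :: "ser \<Rightarrow> ser" where
  "shuffle_inv s = (THE t. shuffle s t = one_ser)"

text \<open>psi_e(eta)(1) for the composition product; e_0 := 1\<close>
fun psi :: "vser \<Rightarrow> nat list \<Rightarrow> ser \<Rightarrow> ser" where
  "psi e [] s = s"
| "psi e (i # eta) s = prefix_ser 0 (shuffle (if i = 0 then one_ser else e i) (psi e eta s))"

text \<open>composition product c o e, c over the alphabet {x'_0..x'_l}\<close>
definition comp_ser :: "nat \<Rightarrow> ser \<Rightarrow> vser \<Rightarrow> ser" where
  "comp_ser l c e w = (\<Sum>eta\<in>{eta. length eta \<le> length w \<and> set eta \<subseteq> {0..l}}.
                          c eta * psi e eta one_ser w)"

text \<open>phi-bar_g(eta)(1) for the multiplicative mixed composition\<close>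
fun phibar :: "vser \<Rightarrow> nat list \<Rightarrow> ser \<Rightarrow> ser" where
  "phibar g [] s = s"
| "phibar g (i # eta) s =
     (if i = 0 then prefix_ser 0 (phibar g eta s) else prefix_ser i (shuffle (g i) (phibar g eta s)))"

definition mixed_comp :: "ser \<Rightarrow> vser \<Rightarrow> ser" where
  "mixed_comp c g w = (\<Sum>eta\<in>{eta. length eta \<le> length w \<and> set eta \<subseteq> set w}.
                          c eta * phibar g eta one_ser w)"

text \<open>composition inverse of a purely improper g in R^m<<X>>, X = {x_0..x_m}:
the unique h in R^m<<X>> with h = g^{sh-1} mixed-composed with delta_h\<close>
definition comp_inv :: "nat \<Rightarrow> vser \<Rightarrow> vser" where
  "comp_inv m g = (THE h. series_on m m h \<and> (\<forall>i\<in>{1..m}. h i = mixed_comp (shuffle_inv (g i)) h))"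

definition fb_product :: "nat \<Rightarrow> nat \<Rightarrow> vser \<Rightarrow> vser \<Rightarrow> vser" where
  "fb_product m q c d =
     (let g = (\<lambda>j. if j \<in> {1..m} then comp_ser q (shuffle_inv (d j)) c else (\<lambda>_. 0));
          h = comp_inv m g
      in (\<lambda>i. mixed_comp (c i) h))"

text \<open>Formal Chen-Fliess series: time functions are formal power series in (t - t0),
inputs u_1,u_2,... are real fps, u_0 = 1, iterated integrals from t0.\<close>
fun iter_int :: "(nat \<Rightarrow> real fps) \<Rightarrow> nat list \<Rightarrow> real fps" where
  "iter_int u [] = 1"
| "iter_int u (i # eta) = fps_integral0 ((if i = 0 then 1 else u i) * iter_int u eta)"

text \<open>F_c[u] for a scalar series c over {x_0..x_n}; the coefficient of t^k only involves
words of length \<le> k, so the sum is formally well defined.\<close>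
definition CF :: "nat \<Rightarrow> ser \<Rightarrow> (nat \<Rightarrow> real fps) \<Rightarrow> real fps" where
  "CF n c u = Abs_fps (\<lambda>k. \<Sum>eta\<in>{eta. length eta \<le> k \<and> set eta \<subseteq> {0..n}}.
                              c eta * fps_nth (iter_int u eta) k)"

end

theory Submission
  imports Defs
begin
unbundle fps_syntax

definition WW :: "nat \<Rightarrow> nat \<Rightarrow> nat list set" where
  "WW N k = {eta. length eta \<le> k \<and> set eta \<subseteq> {0..N}}"

lemma finite_WW[simp]: "finite (WW N k)"
proof -
  have "WW N k = {xs. set xs \<subseteq> {0..N} \<and> length xs \<le> k}" by (auto simp: WW_def)
  thus ?thesis using finite_lists_length_le[of "{0..N}" k] by simp
qed

lemma CF_WW: "CF N c u = Abs_fps (\<lambda>k. \<Sum>eta\<in>WW N k. c eta * fps_nth (iter_int u eta) k)"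
  unfolding CF_def WW_def ..

lemma iter_int_low: "k < length eta \<Longrightarrow> iter_int u eta $ k = 0"
proof (induction eta arbitrary: k)
  case Nil then show ?case by simp
next
  case (Cons i eta)
  show ?case
  proof (cases k)
    case 0 then show ?thesis by simp
  next
    case (Suc k')
    have "((if i = 0 then 1 else u i) * iter_int u eta) $ k' = 0"
      unfolding fps_mult_nth
      by (rule sum.neutral) (use Cons Suc in auto)
    then show ?thesis using Suc by simp
  qed
qed

lemma CF_nth: "k \<le> K \<Longrightarrow> CF N c u $ k = (\<Sum>w\<in>WW N K. c w * iter_int u w $ k)"
proof -
  assume kK: "k \<le> K"
  have "CF N c u $ k = (\<Sum>w\<in>WW N k. c w * iter_int u w $ k)" by (simp add: CF_WW)
  also have "\<dots> = (\<Sum>w\<in>WW N K. c w * iter_int u w $ k)"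
  proof (rule sum.mono_neutral_left)
    show "WW N k \<subseteq> WW N K" using kK by (auto simp: WW_def)
    show "\<forall>i\<in>WW N K - WW N k. c i * iter_int u i $ k = 0"
      by (auto simp: WW_def intro!: iter_int_low)
  qed simp
  finally show ?thesis .
qed

lemma CF_add: "CF N (\<lambda>w. x w + y w) u = CF N x u + CF N y u"
  by (rule fps_ext) (simp add: CF_WW sum.distrib distrib_right)

lemma CF_cmult: "CF N (\<lambda>w. a * x w) u = fps_const a * CF N x u"
  by (rule fps_ext) (simp add: CF_WW sum_distrib_left mult.assoc)

lemma CF_word: "set v \<subseteq> {0..N} \<Longrightarrow> CF N (word_ser v) u = iter_int u v"
proof (rule fps_ext)
  fix k assume v: "set v \<subseteq> {0..N}"
  have "CF N (word_ser v) u $ k = (\<Sum>w\<in>WW N (max k (length v)). word_ser v w * iter_int u w $ k)"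
    by (rule CF_nth) simp
  also have "\<dots> = (\<Sum>w\<in>WW N (max k (length v)). if w = v then iter_int u v $ k else 0)"
    by (rule sum.cong) (auto simp: word_ser_def)
  also have "\<dots> = (if v \<in> WW N (max k (length v)) then iter_int u v $ k else 0)"
    by (rule sum.delta[OF finite_WW])
  also have "\<dots> = iter_int u v $ k" using v by (simp add: WW_def)
  finally show "CF N (word_ser v) u $ k = iter_int u v $ k" .
qed

lemma one_ser_word: "one_ser = word_ser []"
  by (auto simp: one_ser_def word_ser_def)

lemma CF_one: "CF N one_ser u = 1"
  using CF_word[of "[]" N u] by (simp add: one_ser_word)

definition UU :: "(nat \<Rightarrow> real fps) \<Rightarrow> nat \<Rightarrow> real fps" where
  "UU u i = (if i = 0 then 1 else u i)"

lemma iter_int_Cons: "iter_int u (i # eta) = fps_integral0 (UU u i * iter_int u eta)"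
  by (simp add: UU_def)

lemma CF_prefix:
  assumes "i \<le> N"
  shows "CF N (prefix_ser i x) u = fps_integral0 (UU u i * CF N x u)"
proof (rule fps_ext)
  fix k
  show "CF N (prefix_ser i x) u $ k = fps_integral0 (UU u i * CF N x u) $ k"
  proof (cases k)
    case 0
    have "CF N (prefix_ser i x) u $ 0 = (\<Sum>w\<in>WW N 0. prefix_ser i x w * iter_int u w $ 0)"
      by (rule CF_nth) simp
    also have "\<dots> = 0"
      by (rule sum.neutral) (auto simp: WW_def prefix_ser_def)
    finally show ?thesis using 0 by simp
  next
    case (Suc k')
    have "CF N (prefix_ser i x) u $ Suc k' = (\<Sum>w\<in>WW N (Suc k'). prefix_ser i x w * iter_int u w $ Suc k')"
      by (rule CF_nth) simp
    also have "\<dots> = (\<Sum>w\<in>Cons i ` WW N k'. prefix_ser i x w * iter_int u w $ Suc k')"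
    proof (rule sum.mono_neutral_right)
      show "Cons i ` WW N k' \<subseteq> WW N (Suc k')" using assms by (auto simp: WW_def)
      show "\<forall>w\<in>WW N (Suc k') - Cons i ` WW N k'. prefix_ser i x w * iter_int u w $ Suc k' = 0"
      proof
        fix w assume w: "w \<in> WW N (Suc k') - Cons i ` WW N k'"
        show "prefix_ser i x w * iter_int u w $ Suc k' = 0"
        proof (cases w)
          case Nil then show ?thesis by (simp add: prefix_ser_def)
        next
          case (Cons b w')
          then show ?thesis using w by (auto simp: prefix_ser_def WW_def)
        qed
      qed
    qed simp
    also have "\<dots> = (\<Sum>w\<in>WW N k'. x w * iter_int u (i # w) $ Suc k')"
      by (subst sum.reindex) (auto simp: prefix_ser_def)
    also have "\<dots> = (\<Sum>w\<in>WW N k'. x w * (inverse (of_nat (Suc k')) * (\<Sum>j=0..k'. iter_int u w $ j * UU u i $ (k' - j))))"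
      by (simp del: iter_int.simps add: iter_int_Cons mult.commute[of "UU u i"] fps_mult_nth)
    also have "\<dots> = inverse (of_nat (Suc k')) * (\<Sum>j=0..k'. (\<Sum>w\<in>WW N k'. x w * iter_int u w $ j) * UU u i $ (k' - j))"
      by (simp add: sum_distrib_left sum_distrib_right sum.swap[of _ "WW N k'"] mult_ac)
    also have "\<dots> = inverse (of_nat (Suc k')) * (\<Sum>j=0..k'. CF N x u $ j * UU u i $ (k' - j))"
      by (simp add: CF_nth)
    also have "\<dots> = fps_integral0 (UU u i * CF N x u) $ k"
      using Suc by (simp add: mult.commute[of "UU u i"] fps_mult_nth)
    finally show ?thesis using Suc by simp
  qed
qed

definition PP :: "nat list \<Rightarrow> (nat list \<times> nat list) set" where
  "PP w = {(u,v). length u + length v = length w \<and> set u \<subseteq> set w \<and> set v \<subseteq> set w}"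

lemma finite_PP[simp]: "finite (PP w)"
proof -
  have f: "finite {xs. set xs \<subseteq> set w \<and> length xs \<le> length w}"
    by (rule finite_lists_length_le) simp
  have "PP w \<subseteq> {xs. set xs \<subseteq> set w \<and> length xs \<le> length w} \<times> {xs. set xs \<subseteq> set w \<and> length xs \<le> length w}"
    by (auto simp: PP_def)
  thus ?thesis using finite_cartesian_product[OF f f] by (rule finite_subset)
qed

lemma shuffle_PP: "shuffle s t w = (\<Sum>(a,b)\<in>PP w. s a * t b * sh_word a b w)"
  unfolding shuffle_def PP_def ..

lemma prefix_ser_nz: "prefix_ser a x w \<noteq> 0 \<Longrightarrow> \<exists>w'. w = a # w' \<and> x w' \<noteq> 0"
  by (cases w) (auto simp: prefix_ser_def split: if_splits)

lemma prefix_ser_Cons: "prefix_ser a x (b # w) = (if b = a then x w else 0)"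
  by (simp add: prefix_ser_def)

lemma prefix_ser_Nil: "prefix_ser a x [] = 0"
  by (simp add: prefix_ser_def)

lemma sh_support:
  "sh_word a b w \<noteq> 0 \<Longrightarrow> length w = length a + length b \<and> set a \<subseteq> set w \<and> set b \<subseteq> set w"
proof (induction a b arbitrary: w rule: sh_word.induct)
  case (1 v) then show ?case by (auto simp: word_ser_def split: if_splits)
next
  case (2 a u) then show ?case by (auto simp: word_ser_def split: if_splits)
next
  case (3 a u b v)
  from 3(3) have "prefix_ser a (sh_word u (b # v)) w \<noteq> 0 \<or> prefix_ser b (sh_word (a # u) v) w \<noteq> 0"
    by auto
  then show ?case
  proof
    assume "prefix_ser a (sh_word u (b # v)) w \<noteq> 0"
    then obtain w' where "w = a # w'" "sh_word u (b # v) w' \<noteq> 0" by (blast dest: prefix_ser_nz)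
    with 3(1)[of w'] show ?case by auto
  next
    assume "prefix_ser b (sh_word (a # u) v) w \<noteq> 0"
    then obtain w' where "w = b # w'" "sh_word (a # u) v w' \<noteq> 0" by (blast dest: prefix_ser_nz)
    with 3(2)[of w'] show ?case by auto
  qed
qed

lemma int_prod:
  fixes F G :: "real fps"
  shows "fps_integral0 F * fps_integral0 G = fps_integral0 (F * fps_integral0 G + fps_integral0 F * G)"
proof -
  have "fps_deriv (fps_integral0 F * fps_integral0 G) = fps_deriv (fps_integral0 (F * fps_integral0 G + fps_integral0 F * G))"
    by (simp add: fps_deriv_fps_integral fps_deriv_mult)
  then show ?thesis unfolding fps_deriv_eq_iff by simp
qed

lemma sh_iter:
  "set a \<subseteq> {0..N} \<Longrightarrow> set b \<subseteq> {0..N} \<Longrightarrow> iter_int u a * iter_int u b = CF N (sh_word a b) u"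
proof (induction a b rule: sh_word.induct)
  case (1 v) then show ?case by (simp add: CF_word)
next
  case (2 a u) then show ?case by (simp add: CF_word)
next
  case (3 a x b y)
  have "iter_int u (a # x) * iter_int u (b # y) =
     fps_integral0 (UU u a * iter_int u x * fps_integral0 (UU u b * iter_int u y)
                   + fps_integral0 (UU u a * iter_int u x) * (UU u b * iter_int u y))"
    by (simp only: iter_int_Cons int_prod)
  also have "\<dots> = fps_integral0 (UU u a * (iter_int u x * iter_int u (b # y)))
                   + fps_integral0 (UU u b * (iter_int u (a # x) * iter_int u y))"
    by (simp only: iter_int_Cons fps_integral0_add mult_ac)
  also have "\<dots> = CF N (prefix_ser a (sh_word x (b # y))) u + CF N (prefix_ser b (sh_word (a # x) y)) u"
    using 3 by (simp add: CF_prefix)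
  also have "\<dots> = CF N (sh_word (a # x) (b # y)) u"
    by (simp add: CF_add)
  finally show ?case .
qed

lemma shuffle_WW:
  assumes "w \<in> WW N k"
  shows "shuffle s t w = (\<Sum>a\<in>WW N k. \<Sum>b\<in>WW N k. s a * t b * sh_word a b w)"
proof -
  have "shuffle s t w = (\<Sum>(a,b)\<in>PP w. s a * t b * sh_word a b w)" by (rule shuffle_PP)
  also have "\<dots> = (\<Sum>(a,b)\<in>WW N k \<times> WW N k. s a * t b * sh_word a b w)"
  proof (rule sum.mono_neutral_left)
    show "PP w \<subseteq> WW N k \<times> WW N k" using assms by (auto simp: PP_def WW_def)
    show "\<forall>i\<in>WW N k \<times> WW N k - PP w. (case i of (a, b) \<Rightarrow> s a * t b * sh_word a b w) = 0"
      using sh_support by (fastforce simp: PP_def)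
  qed simp
  also have "\<dots> = (\<Sum>a\<in>WW N k. \<Sum>b\<in>WW N k. s a * t b * sh_word a b w)"
    by (rule sum.cartesian_product[symmetric])
  finally show ?thesis .
qed

lemma CF_shuffle: "CF N (shuffle s t) u = CF N s u * CF N t u"
proof (rule fps_ext)
  fix k
  let ?E = "iter_int u"
  have "CF N (shuffle s t) u $ k = (\<Sum>w\<in>WW N k. shuffle s t w * ?E w $ k)"
    by (rule CF_nth) simp
  also have "\<dots> = (\<Sum>w\<in>WW N k. (\<Sum>a\<in>WW N k. \<Sum>b\<in>WW N k. s a * t b * sh_word a b w) * ?E w $ k)"
    by (rule sum.cong) (simp_all add: shuffle_WW)
  also have "\<dots> = (\<Sum>a\<in>WW N k. \<Sum>b\<in>WW N k. s a * t b * (\<Sum>w\<in>WW N k. sh_word a b w * ?E w $ k))"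
  proof -
    have "(\<Sum>w\<in>WW N k. (\<Sum>a\<in>WW N k. \<Sum>b\<in>WW N k. s a * t b * sh_word a b w) * ?E w $ k)
        = (\<Sum>w\<in>WW N k. \<Sum>a\<in>WW N k. \<Sum>b\<in>WW N k. s a * t b * (sh_word a b w * ?E w $ k))"
      by (simp add: sum_distrib_right mult.assoc)
    also have "\<dots> = (\<Sum>a\<in>WW N k. \<Sum>w\<in>WW N k. \<Sum>b\<in>WW N k. s a * t b * (sh_word a b w * ?E w $ k))"
      by (rule sum.swap)
    also have "\<dots> = (\<Sum>a\<in>WW N k. \<Sum>b\<in>WW N k. \<Sum>w\<in>WW N k. s a * t b * (sh_word a b w * ?E w $ k))"
      by (rule sum.cong[OF refl], rule sum.swap)
    also have "\<dots> = (\<Sum>a\<in>WW N k. \<Sum>b\<in>WW N k. s a * t b * (\<Sum>w\<in>WW N k. sh_word a b w * ?E w $ k))"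
      by (simp add: sum_distrib_left)
    finally show ?thesis .
  qed
  also have "\<dots> = (\<Sum>a\<in>WW N k. \<Sum>b\<in>WW N k. s a * t b * (?E a * ?E b) $ k)"
  proof (intro sum.cong refl)
    fix a b assume a: "a \<in> WW N k" and b: "b \<in> WW N k"
    have "(\<Sum>w\<in>WW N k. sh_word a b w * ?E w $ k) = CF N (sh_word a b) u $ k"
      by (rule CF_nth[symmetric]) simp
    also have "\<dots> = (?E a * ?E b) $ k" using a b sh_iter[of a N b u] by (simp add: WW_def)
    finally show "s a * t b * (\<Sum>w\<in>WW N k. sh_word a b w * ?E w $ k) = s a * t b * (?E a * ?E b) $ k"
      by simp
  qed
  also have "\<dots> = (\<Sum>j=0..k. (\<Sum>a\<in>WW N k. s a * ?E a $ j) * (\<Sum>b\<in>WW N k. t b * ?E b $ (k - j)))"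
  proof -
    have "(\<Sum>a\<in>WW N k. \<Sum>b\<in>WW N k. s a * t b * (?E a * ?E b) $ k)
       = (\<Sum>a\<in>WW N k. \<Sum>b\<in>WW N k. \<Sum>j=0..k. (s a * ?E a $ j) * (t b * ?E b $ (k - j)))"
      by (simp add: fps_mult_nth sum_distrib_left mult_ac)
    also have "\<dots> = (\<Sum>a\<in>WW N k. \<Sum>j=0..k. \<Sum>b\<in>WW N k. (s a * ?E a $ j) * (t b * ?E b $ (k - j)))"
      by (rule sum.cong[OF refl], rule sum.swap)
    also have "\<dots> = (\<Sum>j=0..k. \<Sum>a\<in>WW N k. \<Sum>b\<in>WW N k. (s a * ?E a $ j) * (t b * ?E b $ (k - j)))"
      by (rule sum.swap)
    also have "\<dots> = (\<Sum>j=0..k. (\<Sum>a\<in>WW N k. s a * ?E a $ j) * (\<Sum>b\<in>WW N k. t b * ?E b $ (k - j)))"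
      by (simp only: sum_product)
    finally show ?thesis .
  qed
  also have "\<dots> = (\<Sum>j=0..k. CF N s u $ j * CF N t u $ (k - j))"
  proof (rule sum.cong[OF refl])
    fix j assume "j \<in> {0..k}"
    then have "j \<le> k" "k - j \<le> k" by auto
    then show "(\<Sum>a\<in>WW N k. s a * ?E a $ j) * (\<Sum>b\<in>WW N k. t b * ?E b $ (k - j)) = CF N s u $ j * CF N t u $ (k - j)"
      using CF_nth[of j k N s u] CF_nth[of "k - j" k N t u] by simp
  qed
  also have "\<dots> = (CF N s u * CF N t u) $ k" by (simp add: fps_mult_nth)
  finally show "CF N (shuffle s t) u $ k = (CF N s u * CF N t u) $ k" .
qed

lemma shuffle_nz:
  assumes "shuffle s t w \<noteq> 0"
  shows "\<exists>a b. (a,b) \<in> PP w \<and> s a \<noteq> 0 \<and> t b \<noteq> 0 \<and> sh_word a b w \<noteq> 0"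
proof (rule ccontr)
  assume "\<not> ?thesis"
  then have "shuffle s t w = 0" unfolding shuffle_PP by (intro sum.neutral) auto
  with assms show False by simp
qed

lemma shuffle_short:
  assumes "\<And>v. length v < n \<Longrightarrow> t v = 0" "length w < n"
  shows "shuffle s t w = 0"
  unfolding shuffle_PP using assms by (intro sum.neutral) (auto simp: PP_def)

lemma psi_short: "length w < length eta \<Longrightarrow> psi e eta s w = 0"
proof (induction eta arbitrary: w)
  case Nil then show ?case by simp
next
  case (Cons i eta)
  show ?case
  proof (cases w)
    case Nil then show ?thesis by (simp add: prefix_ser_def)
  next
    case (Cons b w')
    have "shuffle (if i = 0 then one_ser else e i) (psi e eta s) w' = 0"
      by (rule shuffle_short[where n = "length eta"]) (use Cons.IH Cons.prems Cons in auto)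
    then show ?thesis using Cons by (simp add: prefix_ser_def)
  qed
qed

lemma phibar_short: "length w < length eta \<Longrightarrow> phibar g eta s w = 0"
proof (induction eta arbitrary: w)
  case Nil then show ?case by simp
next
  case (Cons i eta)
  show ?case
  proof (cases w)
    case Nil then show ?thesis by (simp add: prefix_ser_def)
  next
    case (Cons b w')
    have "shuffle (g i) (phibar g eta s) w' = 0"
      by (rule shuffle_short[where n = "length eta"]) (use Cons.IH Cons.prems Cons in auto)
    moreover have "phibar g eta s w' = 0" using Cons.IH Cons.prems Cons by auto
    ultimately show ?thesis using Cons by (simp add: prefix_ser_def)
  qed
qed

lemma phibar_set: "phibar g eta s w \<noteq> 0 \<Longrightarrow> set eta \<subseteq> set w"
proof (induction eta arbitrary: w)
  case Nil then show ?case by simp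
next
  case (Cons i eta)
  show ?case
  proof (cases "i = 0")
    case True
    with Cons.prems obtain w' where "w = i # w'" "phibar g eta s w' \<noteq> 0"
      by (auto dest: prefix_ser_nz)
    with Cons.IH show ?thesis by auto
  next
    case False
    with Cons.prems obtain w' where w: "w = i # w'" "shuffle (g i) (phibar g eta s) w' \<noteq> 0"
      by (auto dest: prefix_ser_nz)
    then obtain a b where "(a,b) \<in> PP w'" "phibar g eta s b \<noteq> 0" by (blast dest: shuffle_nz)
    with Cons.IH[of b] w show ?thesis by (auto simp: PP_def)
  qed
qed

lemma CF_psi: "CF N (psi e eta one_ser) u = iter_int (\<lambda>i. CF N (e i) u) eta"
proof (induction eta)
  case Nil then show ?case by (simp add: CF_one)
next
  case (Cons i eta)
  then show ?case by (simp add: CF_prefix UU_def CF_shuffle CF_one)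
qed

lemma CF_phibar: "set eta \<subseteq> {0..N} \<Longrightarrow> CF N (phibar g eta one_ser) v = iter_int (\<lambda>j. v j * CF N (g j) v) eta"
proof (induction eta)
  case Nil then show ?case by (simp add: CF_one)
next
  case (Cons i eta)
  then show ?case by (simp add: CF_prefix UU_def CF_shuffle mult_ac)
qed

lemma comp_CF: "CF m (comp_ser q a c) u = CF q a (\<lambda>i. CF m (c i) u)"
proof (rule fps_ext)
  fix k
  let ?E = "iter_int u" and ?F = "iter_int (\<lambda>i. CF m (c i) u)"
  have "CF m (comp_ser q a c) u $ k = (\<Sum>w\<in>WW m k. comp_ser q a c w * ?E w $ k)"
    by (rule CF_nth) simp
  also have "\<dots> = (\<Sum>w\<in>WW m k. (\<Sum>eta\<in>WW q k. a eta * psi c eta one_ser w) * ?E w $ k)"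
  proof (rule sum.cong[OF refl])
    fix w assume w: "w \<in> WW m k"
    have "comp_ser q a c w = (\<Sum>eta\<in>WW q (length w). a eta * psi c eta one_ser w)"
      by (simp add: comp_ser_def WW_def)
    also have "\<dots> = (\<Sum>eta\<in>WW q k. a eta * psi c eta one_ser w)"
    proof (rule sum.mono_neutral_left)
      show "WW q (length w) \<subseteq> WW q k" using w by (auto simp: WW_def)
      show "\<forall>i\<in>WW q k - WW q (length w). a i * psi c i one_ser w = 0"
        using psi_short by (fastforce simp: WW_def not_le)
    qed simp
    finally show "comp_ser q a c w * ?E w $ k = (\<Sum>eta\<in>WW q k. a eta * psi c eta one_ser w) * ?E w $ k"
      by simp
  qed
  also have "\<dots> = (\<Sum>w\<in>WW m k. \<Sum>eta\<in>WW q k. a eta * (psi c eta one_ser w * ?E w $ k))"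
    by (simp add: sum_distrib_right mult.assoc)
  also have "\<dots> = (\<Sum>eta\<in>WW q k. \<Sum>w\<in>WW m k. a eta * (psi c eta one_ser w * ?E w $ k))"
    by (rule sum.swap)
  also have "\<dots> = (\<Sum>eta\<in>WW q k. a eta * CF m (psi c eta one_ser) u $ k)"
    by (simp add: sum_distrib_left[symmetric] CF_WW)
  also have "\<dots> = (\<Sum>eta\<in>WW q k. a eta * ?F eta $ k)"
    by (simp add: CF_psi)
  also have "\<dots> = CF q a (\<lambda>i. CF m (c i) u) $ k"
    by (simp add: CF_WW)
  finally show "CF m (comp_ser q a c) u $ k = CF q a (\<lambda>i. CF m (c i) u) $ k" .
qed

lemma mixed_CF: "CF m (mixed_comp s h) v = CF m s (\<lambda>j. v j * CF m (h j) v)"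
proof (rule fps_ext)
  fix k
  let ?E = "iter_int v" and ?F = "iter_int (\<lambda>j. v j * CF m (h j) v)"
  have "CF m (mixed_comp s h) v $ k = (\<Sum>w\<in>WW m k. mixed_comp s h w * ?E w $ k)"
    by (rule CF_nth) simp
  also have "\<dots> = (\<Sum>w\<in>WW m k. (\<Sum>eta\<in>WW m k. s eta * phibar h eta one_ser w) * ?E w $ k)"
  proof (rule sum.cong[OF refl])
    fix w assume w: "w \<in> WW m k"
    have fin: "finite {eta. length eta \<le> length w \<and> set eta \<subseteq> set w}"
    proof -
      have "{eta. length eta \<le> length w \<and> set eta \<subseteq> set w} = {xs. set xs \<subseteq> set w \<and> length xs \<le> length w}"
        by auto
      then show ?thesis using finite_lists_length_le[of "set w" "length w"] by simp
    qed
    have "mixed_comp s h w = (\<Sum>eta\<in>{eta. length eta \<le> length w \<and> set eta \<subseteq> set w}. s eta * phibar h eta one_ser w)"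
      by (simp add: mixed_comp_def)
    also have "\<dots> = (\<Sum>eta\<in>WW m k. s eta * phibar h eta one_ser w)"
    proof (rule sum.mono_neutral_left)
      show "{eta. length eta \<le> length w \<and> set eta \<subseteq> set w} \<subseteq> WW m k" using w by (auto simp: WW_def)
      show "\<forall>i\<in>WW m k - {eta. length eta \<le> length w \<and> set eta \<subseteq> set w}. s i * phibar h i one_ser w = 0"
        using phibar_short phibar_set by (fastforce simp: not_le)
    qed simp
    finally show "mixed_comp s h w * ?E w $ k = (\<Sum>eta\<in>WW m k. s eta * phibar h eta one_ser w) * ?E w $ k"
      by simp
  qed
  also have "\<dots> = (\<Sum>w\<in>WW m k. \<Sum>eta\<in>WW m k. s eta * (phibar h eta one_ser w * ?E w $ k))"
    by (simp add: sum_distrib_right mult.assoc)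
  also have "\<dots> = (\<Sum>eta\<in>WW m k. \<Sum>w\<in>WW m k. s eta * (phibar h eta one_ser w * ?E w $ k))"
    by (rule sum.swap)
  also have "\<dots> = (\<Sum>eta\<in>WW m k. s eta * CF m (phibar h eta one_ser) v $ k)"
    by (simp add: sum_distrib_left[symmetric] CF_WW)
  also have "\<dots> = (\<Sum>eta\<in>WW m k. s eta * ?F eta $ k)"
    by (rule sum.cong[OF refl]) (simp add: CF_phibar WW_def)
  also have "\<dots> = CF m s (\<lambda>j. v j * CF m (h j) v) $ k"
    by (simp add: CF_WW)
  finally show "CF m (mixed_comp s h) v $ k = CF m s (\<lambda>j. v j * CF m (h j) v) $ k" .
qed

subsection \<open>Fixed points of length-contractive maps\<close>

lemma fix_unique:
  fixes F :: "('i \<Rightarrow> nat list \<Rightarrow> real) \<Rightarrow> 'i \<Rightarrow> nat list \<Rightarrow> real"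
  assumes contr: "\<And>x y w i. (\<forall>j b. length b < length w \<longrightarrow> x j b = y j b) \<Longrightarrow> F x i w = F y i w"
    and fx: "F x = x" and fy: "F y = y"
  shows "x = y"
proof -
  have "\<forall>i. x i w = y i w" for w
  proof (induction w rule: length_induct)
    case (1 w)
    show ?case
    proof
      fix i
      have "F x i w = F y i w" by (rule contr) (use 1 in auto)
      then show "x i w = y i w" using fx fy by simp
    qed
  qed
  then show ?thesis by (auto simp: fun_eq_iff)
qed

lemma fix_exists:
  fixes F :: "('i \<Rightarrow> nat list \<Rightarrow> real) \<Rightarrow> 'i \<Rightarrow> nat list \<Rightarrow> real"
  assumes contr: "\<And>x y w i. (\<forall>j b. length b < length w \<longrightarrow> x j b = y j b) \<Longrightarrow> F x i w = F y i w"
  shows "\<exists>x. F x = x"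
proof -
  define T where "T n = (F ^^ n) (\<lambda>_ _. 0)" for n
  have TS: "T (Suc n) = F (T n)" for n by (simp add: T_def)
  have stab: "\<forall>i (w::nat list). length w < n \<longrightarrow> T n i w = T (Suc n) i w" for n
  proof (induction n)
    case 0 then show ?case by simp
  next
    case (Suc n)
    show ?case
    proof (intro allI impI)
      fix i and w :: "nat list" assume "length w < Suc n"
      then have "\<forall>j b. length b < length w \<longrightarrow> T n j b = T (Suc n) j b" using Suc by auto
      then have "F (T n) i w = F (T (Suc n)) i w" by (rule contr)
      then show "T (Suc n) i w = T (Suc (Suc n)) i w" by (simp add: TS)
    qed
  qed
  have stab2: "T n i w = T (Suc (length w)) i w" if "Suc (length w) \<le> n" for n i w
    using that
  proof (induction n rule: dec_induct)
    case base then show ?case by simp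
  next
    case (step n)
    then show ?case using stab[of n] by simp
  qed
  define x where "x i w = T (Suc (length w)) i w" for i w
  have "F x i w = x i w" for i w
  proof -
    have "\<forall>j b. length b < length w \<longrightarrow> x j b = T (Suc (length w)) j b"
    proof (intro allI impI)
      fix j and b :: "nat list" assume "length b < length w"
      then show "x j b = T (Suc (length w)) j b"
        using stab2[where n="Suc (length w)" and i=j and w=b] by (simp add: x_def)
    qed
    then have "F x i w = F (T (Suc (length w))) i w" by (rule contr)
    also have "\<dots> = T (Suc (Suc (length w))) i w" by (simp add: TS)
    also have "\<dots> = x i w" using stab2[where n="Suc (Suc (length w))" and i=i and w=w] by (simp add: x_def)
    finally show ?thesis .
  qed
  then show ?thesis by (auto simp: fun_eq_iff)
qed

subsection \<open>Shuffle inverse\<close>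

lemma sh_support2: "sh_word a b w \<noteq> 0 \<Longrightarrow> set w \<subseteq> set a \<union> set b"
proof (induction a b arbitrary: w rule: sh_word.induct)
  case (1 v) then show ?case by (auto simp: word_ser_def split: if_splits)
next
  case (2 a u) then show ?case by (auto simp: word_ser_def split: if_splits)
next
  case (3 a u b v)
  from 3(3) have "prefix_ser a (sh_word u (b # v)) w \<noteq> 0 \<or> prefix_ser b (sh_word (a # u) v) w \<noteq> 0"
    by auto
  then show ?case
  proof
    assume "prefix_ser a (sh_word u (b # v)) w \<noteq> 0"
    then obtain w' where "w = a # w'" "sh_word u (b # v) w' \<noteq> 0" by (blast dest: prefix_ser_nz)
    with 3(1)[of w'] show ?case by auto
  next
    assume "prefix_ser b (sh_word (a # u) v) w \<noteq> 0"
    then obtain w' where "w = b # w'" "sh_word (a # u) v w' \<noteq> 0" by (blast dest: prefix_ser_nz)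
    with 3(2)[of w'] show ?case by auto
  qed
qed

lemma sh_Nil_self: "sh_word [] w w = 1"
  by (simp add: word_ser_def)

lemma shuffle_split:
  "shuffle s t w = s [] * t w + (\<Sum>(a,b)\<in>PP w - {([],w)}. s a * t b * sh_word a b w)"
proof -
  have "([],w) \<in> PP w" by (simp add: PP_def)
  then show ?thesis unfolding shuffle_PP by (simp add: sum.remove word_ser_def)
qed

lemma shuffle_Nil: "shuffle s t [] = s [] * t []"
proof -
  have "PP [] = {([],[])}" by (auto simp: PP_def)
  then show ?thesis by (simp add: shuffle_split)
qed

definition invF :: "ser \<Rightarrow> (unit \<Rightarrow> ser) \<Rightarrow> unit \<Rightarrow> ser" where
  "invF s t i w = (one_ser w - (\<Sum>(a,b)\<in>PP w - {([],w)}. s a * t () b * sh_word a b w)) / s []"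

lemma invF_contr:
  assumes "\<forall>j b. length b < length w \<longrightarrow> x j b = y j b"
  shows "invF s x i w = invF s y i w"
proof -
  have "(\<Sum>(a,b)\<in>PP w - {([],w)}. s a * x () b * sh_word a b w) = (\<Sum>(a,b)\<in>PP w - {([],w)}. s a * y () b * sh_word a b w)"
  proof (rule sum.cong[OF refl])
    fix p assume p: "p \<in> PP w - {([],w)}"
    obtain a b where ab: "p = (a,b)" by (cases p)
    show "(case p of (a, b) \<Rightarrow> s a * x () b * sh_word a b w) = (case p of (a, b) \<Rightarrow> s a * y () b * sh_word a b w)"
    proof (cases "a = []")
      case True
      then have "b \<noteq> w" using p ab by auto
      then have "sh_word a b w = 0" using True by (simp add: word_ser_def)
      then show ?thesis using ab by simp
    next
      case False
      then have "length a > 0" by simp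
      moreover have "length a + length b = length w" using p ab by (auto simp: PP_def)
      ultimately have "length b < length w" by linarith
      then show ?thesis using ab assms by simp
    qed
  qed
  then show ?thesis by (simp add: invF_def)
qed

lemma invF_fix_iff:
  assumes "s [] \<noteq> 0"
  shows "invF s (\<lambda>_. t) = (\<lambda>_. t) \<longleftrightarrow> shuffle s t = one_ser"
proof -
  have "invF s (\<lambda>_. t) () w = t w \<longleftrightarrow> shuffle s t w = one_ser w" for w
    using assms by (auto simp: invF_def shuffle_split field_simps)
  then show ?thesis by (auto simp: fun_eq_iff)
qed

lemma shuffle_inv_unique:
  assumes "s [] \<noteq> 0" "shuffle s t1 = one_ser" "shuffle s t2 = one_ser"
  shows "t1 = t2"
proof -
  have "(\<lambda>_::unit. t1) = (\<lambda>_. t2)"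
    by (rule fix_unique[of "invF s"]) (use invF_contr assms invF_fix_iff in auto)
  then show ?thesis by (metis)
qed

lemma shuffle_inv_ex:
  assumes "s [] \<noteq> 0"
  shows "\<exists>t. shuffle s t = one_ser"
proof -
  obtain x where "invF s x = x" using fix_exists[of "invF s"] invF_contr by blast
  moreover have xe: "(\<lambda>_. x ()) = x" by (rule ext) (metis (full_types) old.unit.exhaust)
  ultimately have "invF s (\<lambda>_. x ()) = (\<lambda>_. x ())" by (simp only: xe)
  then show ?thesis using invF_fix_iff[of s, OF assms] by blast
qed

lemma shuffle_inv:
  assumes "s [] \<noteq> 0"
  shows "shuffle s (shuffle_inv s) = one_ser"
proof -
  obtain t where t: "shuffle s t = one_ser" using shuffle_inv_ex[of s, OF assms] by blast
  have "shuffle_inv s = t" unfolding shuffle_inv_def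
    by (rule the_equality) (use t shuffle_inv_unique[of s, OF assms] in auto)
  then show ?thesis using t by simp
qed

lemma shuffle_inv_support:
  assumes s0: "s [] \<noteq> 0" and sA: "\<And>a. s a \<noteq> 0 \<Longrightarrow> set a \<subseteq> A"
    and w: "shuffle_inv s w \<noteq> 0"
  shows "set w \<subseteq> A"
proof -
  define t where "t = shuffle_inv s"
  define t' where "t' w = (if set w \<subseteq> A then t w else 0)" for w
  have t: "shuffle s t = one_ser" using shuffle_inv[of s, OF s0] by (simp add: t_def)
  have "shuffle s t' w = one_ser w" for w
  proof (cases "set w \<subseteq> A")
    case True
    have "shuffle s t' w = shuffle s t w"
      unfolding shuffle_PP
      by (rule sum.cong[OF refl]) (use True in \<open>auto simp: PP_def t'_def\<close>)
    then show ?thesis using t by simp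
  next
    case False
    have "shuffle s t' w = 0"
    proof (rule ccontr)
      assume "shuffle s t' w \<noteq> 0"
      then obtain a b where "s a \<noteq> 0" "t' b \<noteq> 0" "sh_word a b w \<noteq> 0" by (blast dest: shuffle_nz)
      then have "set a \<subseteq> A" "set b \<subseteq> A" "set w \<subseteq> set a \<union> set b"
        using sA sh_support2 by (auto simp: t'_def split: if_splits)
      with False show False by auto
    qed
    moreover have "w \<noteq> []" using False by auto
    ultimately show ?thesis by (simp add: one_ser_def)
  qed
  then have "t' = t" using shuffle_inv_unique[of s, OF s0 _ t] by (auto simp: fun_eq_iff)
  then show ?thesis using w by (auto simp: t_def t'_def fun_eq_iff split: if_splits)
qed

lemma shuffle_inv_Nil:
  assumes "s [] \<noteq> 0" shows "s [] * shuffle_inv s [] = 1"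
  using shuffle_inv[of s, OF assms] shuffle_Nil[of s "shuffle_inv s"] by (metis one_ser_def)

lemma CF_shuffle_inv:
  assumes "s [] \<noteq> 0" shows "CF N s u * CF N (shuffle_inv s) u = 1"
  using CF_shuffle[of N s "shuffle_inv s" u] shuffle_inv[of s, OF assms] CF_one by simp

subsection \<open>Supports and dependence\<close>

lemma psi_out:
  assumes c: "\<And>i a. c i a \<noteq> 0 \<Longrightarrow> set a \<subseteq> {0..m}"
  shows "psi c eta one_ser w \<noteq> 0 \<Longrightarrow> set w \<subseteq> {0..m}"
proof (induction eta arbitrary: w)
  case Nil then show ?case by (auto simp: one_ser_def split: if_splits)
next
  case (Cons i eta)
  from Cons.prems obtain w' where w: "w = 0 # w'"
    "shuffle (if i = 0 then one_ser else c i) (psi c eta one_ser) w' \<noteq> 0"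
    by (auto dest: prefix_ser_nz)
  then obtain a b where ab: "(if i = 0 then one_ser else c i) a \<noteq> 0" "psi c eta one_ser b \<noteq> 0" "sh_word a b w' \<noteq> 0"
    by (blast dest: shuffle_nz)
  have "set a \<subseteq> {0..m}" using ab(1) c by (auto simp: one_ser_def split: if_splits)
  moreover have "set b \<subseteq> {0..m}" using Cons.IH ab(2) by blast
  ultimately show ?case using w sh_support2[OF ab(3)] by auto
qed

lemma sum_nz: "sum f A \<noteq> 0 \<Longrightarrow> \<exists>x\<in>A. f x \<noteq> 0"
  by (meson sum.neutral)

lemma comp_out:
  assumes c: "\<And>i a. c i a \<noteq> 0 \<Longrightarrow> set a \<subseteq> {0..m}"
    and "comp_ser q a c w \<noteq> 0"
  shows "set w \<subseteq> {0..m}"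
proof -
  from assms(2) obtain eta where "a eta * psi c eta one_ser w \<noteq> 0"
    unfolding comp_ser_def by (blast dest: sum_nz)
  then have "psi c eta one_ser w \<noteq> 0" by auto
  then show ?thesis using psi_out[where c=c and m=m and eta=eta and w=w] c by blast
qed

lemma phibar_out:
  assumes h: "\<And>j b. h j b \<noteq> 0 \<Longrightarrow> set b \<subseteq> {0..m}"
  shows "set eta \<subseteq> {0..m} \<Longrightarrow> phibar h eta one_ser w \<noteq> 0 \<Longrightarrow> set w \<subseteq> {0..m}"
proof (induction eta arbitrary: w)
  case Nil then show ?case by (auto simp: one_ser_def split: if_splits)
next
  case (Cons i eta)
  show ?case
  proof (cases "i = 0")
    case True
    with Cons.prems obtain w' where "w = i # w'" "phibar h eta one_ser w' \<noteq> 0"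
      by (auto dest: prefix_ser_nz)
    with Cons.IH Cons.prems True show ?thesis by auto
  next
    case False
    with Cons.prems obtain w' where w: "w = i # w'" "shuffle (h i) (phibar h eta one_ser) w' \<noteq> 0"
      by (auto dest: prefix_ser_nz)
    then obtain a b where ab: "h i a \<noteq> 0" "phibar h eta one_ser b \<noteq> 0" "sh_word a b w' \<noteq> 0"
      by (blast dest: shuffle_nz)
    have "set a \<subseteq> {0..m}" using ab(1) h by auto
    moreover have "set b \<subseteq> {0..m}" using Cons.IH Cons.prems ab(2) by auto
    ultimately show ?thesis using w Cons.prems sh_support2[OF ab(3)] by auto
  qed
qed

lemma mixed_out:
  assumes s: "\<And>eta. s eta \<noteq> 0 \<Longrightarrow> set eta \<subseteq> {0..m}"
    and h: "\<And>j b. h j b \<noteq> 0 \<Longrightarrow> set b \<subseteq> {0..m}"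
    and "mixed_comp s h w \<noteq> 0"
  shows "set w \<subseteq> {0..m}"
proof -
  from assms(3) obtain eta where "s eta * phibar h eta one_ser w \<noteq> 0"
    unfolding mixed_comp_def by (blast dest: sum_nz)
  then have "phibar h eta one_ser w \<noteq> 0" "set eta \<subseteq> {0..m}" using s[of eta] by auto
  then show ?thesis using phibar_out[where h=h and m=m and eta=eta and w=w] h by blast
qed

lemma phibar_dep:
  "(\<forall>j b. length b < length w \<longrightarrow> x j b = y j b) \<Longrightarrow> phibar x eta s0 w = phibar y eta s0 w"
proof (induction eta arbitrary: w)
  case Nil then show ?case by simp
next
  case (Cons i eta)
  show ?case
  proof (cases w)
    case Nil then show ?thesis by (simp add: prefix_ser_def)
  next
    case (Cons c w')
    have IH': "phibar x eta s0 b = phibar y eta s0 b" if "length b \<le> length w'" for b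
      using Cons.IH[of b] Cons.prems that Cons by auto
    have sh: "shuffle (x i) (phibar x eta s0) w' = shuffle (y i) (phibar y eta s0) w'"
      unfolding shuffle_PP
    proof (rule sum.cong[OF refl])
      fix p assume p: "p \<in> PP w'"
      obtain a b where ab: "p = (a,b)" by (cases p)
      have "length a \<le> length w'" "length b \<le> length w'" using p ab by (auto simp: PP_def)
      then show "(case p of (a, b) \<Rightarrow> x i a * phibar x eta s0 b * sh_word a b w') =
                 (case p of (a, b) \<Rightarrow> y i a * phibar y eta s0 b * sh_word a b w')"
        using ab IH' Cons.prems Cons by auto
    qed
    show ?thesis using sh IH'[of w'] Cons by (simp add: prefix_ser_def)
  qed
qed

lemma mixed_dep:
  "(\<forall>j b. length b < length w \<longrightarrow> x j b = y j b) \<Longrightarrow> mixed_comp s x w = mixed_comp s y w"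
  unfolding mixed_comp_def by (rule sum.cong[OF refl]) (simp add: phibar_dep)

definition invM :: "nat \<Rightarrow> vser \<Rightarrow> vser \<Rightarrow> vser" where
  "invM m S x i w = (if i \<in> {1..m} \<and> set w \<subseteq> {0..m} then mixed_comp (S i) x w else 0)"

lemma comp_inv_prop:
  assumes S: "\<And>i eta. i \<in> {1..m} \<Longrightarrow> shuffle_inv (g i) eta \<noteq> 0 \<Longrightarrow> set eta \<subseteq> {0..m}"
  shows "series_on m m (comp_inv m g) \<and> (\<forall>i\<in>{1..m}. comp_inv m g i = mixed_comp (shuffle_inv (g i)) (comp_inv m g))"
proof -
  let ?S = "\<lambda>i. shuffle_inv (g i)"
  let ?F = "invM m ?S"
  let ?P = "\<lambda>h. series_on m m h \<and> (\<forall>i\<in>{1..m}. h i = mixed_comp (shuffle_inv (g i)) h)"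
  have contr: "\<And>x y w i. (\<forall>j b. length b < length w \<longrightarrow> x j b = y j b) \<Longrightarrow> ?F x i w = ?F y i w"
    by (simp add: invM_def mixed_dep)
  obtain h0 where h0: "?F h0 = h0" using fix_exists[of ?F] contr by blast
  have ser: "series_on m m h0"
    unfolding series_on_def
  proof (intro allI impI)
    fix i w assume "h0 i w \<noteq> 0"
    then have "?F h0 i w \<noteq> 0" using h0 by simp
    then show "i \<in> {1..m} \<and> set w \<subseteq> {0..m}" by (auto simp: invM_def split: if_splits)
  qed
  have hsupp: "\<And>j b. h0 j b \<noteq> 0 \<Longrightarrow> set b \<subseteq> {0..m}" using ser by (auto simp: series_on_def)
  have "?P h0"
  proof (intro conjI ballI ser)
    fix i assume i: "i \<in> {1..m}"
    show "h0 i = mixed_comp (?S i) h0"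
    proof
      fix w
      show "h0 i w = mixed_comp (?S i) h0 w"
      proof (cases "set w \<subseteq> {0..m}")
        case True
        have "?F h0 i w = h0 i w" using h0 by simp
        then show ?thesis using i True by (simp add: invM_def)
      next
        case False
        have "mixed_comp (?S i) h0 w = 0"
          using mixed_out[of "?S i" m h0 w] S[OF i] hsupp False by blast
        moreover have "h0 i w = 0" using False hsupp by blast
        ultimately show ?thesis by simp
      qed
    qed
  qed
  moreover have "h = h0" if "?P h" for h
  proof (rule fix_unique[of ?F, OF contr _ h0])
    show "?F h = h"
    proof (intro ext)
      fix i w
      show "?F h i w = h i w"
      proof (cases "i \<in> {1..m} \<and> set w \<subseteq> {0..m}")
        case True
        then have "h i = mixed_comp (shuffle_inv (g i)) h" using that by blast
        then have "h i w = mixed_comp (shuffle_inv (g i)) h w" by simp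
        then show ?thesis using True by (simp add: invM_def)
      next
        case False
        then have "h i w = 0" using that unfolding series_on_def by blast
        then show ?thesis unfolding invM_def if_not_P[OF False] by simp
      qed
    qed
  qed
  ultimately have "comp_inv m g = h0" unfolding comp_inv_def by (rule the_equality)
  then show ?thesis using \<open>?P h0\<close> by simp
qed

lemma iter_dep:
  "(\<forall>i\<in>set eta - {0}. \<forall>j<k. u i $ j = u' i $ j) \<Longrightarrow> j \<le> k \<Longrightarrow> iter_int u eta $ j = iter_int u' eta $ j"
proof (induction eta arbitrary: j)
  case Nil then show ?case by simp
next
  case (Cons i eta)
  show ?case
  proof (cases j)
    case 0 then show ?thesis by simp
  next
    case (Suc j')
    have "(UU u i * iter_int u eta) $ j' = (UU u' i * iter_int u' eta) $ j'"
      unfolding fps_mult_nth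
    proof (rule sum.cong[OF refl])
      fix l assume "l \<in> {0..j'}"
      then have "l < k" "j' - l \<le> k" using Cons.prems Suc by auto
      then show "UU u i $ l * iter_int u eta $ (j' - l) = UU u' i $ l * iter_int u' eta $ (j' - l)"
        using Cons.prems Cons.IH[of "j' - l"] by (auto simp: UU_def)
    qed
    then show ?thesis using Suc by (simp del: iter_int.simps add: iter_int_Cons)
  qed
qed

lemma CF_dep:
  "(\<forall>i\<in>{1..N}. \<forall>j<k. u i $ j = u' i $ j) \<Longrightarrow> CF N s u $ k = CF N s u' $ k"
proof -
  assume a: "\<forall>i\<in>{1..N}. \<forall>j<k. u i $ j = u' i $ j"
  have "iter_int u eta $ k = iter_int u' eta $ k" if "eta \<in> WW N k" for eta
  proof (rule iter_dep[where k=k])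
    show "\<forall>i\<in>set eta - {0}. \<forall>j<k. u i $ j = u' i $ j" using that a by (auto simp: WW_def)
  qed simp
  then show ?thesis by (simp add: CF_WW)
qed

lemma CF_cong: "(\<And>i. i \<in> {1..N} \<Longrightarrow> u i = u' i) \<Longrightarrow> CF N s u = CF N s u'"
  by (rule fps_ext) (rule CF_dep, auto)

lemma prod_dep:
  assumes "\<forall>j\<le>n. A $ j = A' $ j" "\<forall>j\<le>n. B $ j = B' $ j"
  shows "(A * B) $ n = (A' * B') $ n"
  unfolding fps_mult_nth by (rule sum.cong[OF refl]) (use assms in auto)

lemma loop_unique:
  fixes y y' v :: "nat \<Rightarrow> real fps"
  assumes y: "\<forall>i\<in>{1..q}. y i = CF m (c i) (\<lambda>j. v j * CF q (d j) y)"
    and y': "\<forall>i\<in>{1..q}. y' i = CF m (c i) (\<lambda>j. v j * CF q (d j) y')"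
  shows "\<forall>i\<in>{1..q}. y i = y' i"
proof -
  have "\<forall>i\<in>{1..q}. \<forall>j<k. y i $ j = y' i $ j" for k
  proof (induction k)
    case 0 then show ?case by simp
  next
    case (Suc k)
    show ?case
    proof (intro ballI allI impI)
      fix i j assume i: "i \<in> {1..q}" and j: "j < Suc k"
      show "y i $ j = y' i $ j"
      proof (cases "j < k")
        case True then show ?thesis using Suc.IH i by blast
      next
        case False
        then have jk: "j = k" using j by simp
        have "CF m (c i) (\<lambda>j. v j * CF q (d j) y) $ k = CF m (c i) (\<lambda>j. v j * CF q (d j) y') $ k"
        proof (rule CF_dep, intro ballI allI impI)
          fix l j' assume "l \<in> {1..m}" "j' < k"
          show "(v l * CF q (d l) y) $ j' = (v l * CF q (d l) y') $ j'"
          proof (rule prod_dep)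
            show "\<forall>ja\<le>j'. CF q (d l) y $ ja = CF q (d l) y' $ ja"
            proof (intro allI impI)
              fix ja assume "ja \<le> j'"
              then show "CF q (d l) y $ ja = CF q (d l) y' $ ja"
                using Suc.IH \<open>j' < k\<close> by (intro CF_dep) auto
            qed
          qed simp
        qed
        then show ?thesis using y y' i jk by simp
      qed
    qed
  qed
  then show ?thesis by (auto intro!: fps_ext)
qed

theorem theorem15:
  fixes m q :: nat and c d :: vser
  assumes "series_on m q c" and "series_on q m d"
    and "purely_improper q c" and "purely_improper m d"
  shows "\<forall>(v :: nat \<Rightarrow> real fps) (y :: nat \<Rightarrow> real fps).
           (\<forall>i\<in>{1..q}. y i = CF m (c i) (\<lambda>j. v j * CF q (d j) y))
           \<longleftrightarrow> (\<forall>i\<in>{1..q}. y i = CF m (fb_product m q c d i) v)"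
proof (intro allI)
  fix v y :: "nat \<Rightarrow> real fps"
  define g where "g = (\<lambda>j. if j \<in> {1..m} then comp_ser q (shuffle_inv (d j)) c else (\<lambda>_. 0))"
  define h where "h = comp_inv m g"
  have fb: "fb_product m q c d = (\<lambda>i. mixed_comp (c i) h)"
    by (simp add: fb_product_def g_def h_def Let_def)
  have cS: "\<And>i a. c i a \<noteq> 0 \<Longrightarrow> set a \<subseteq> {0..m}" using assms(1) by (auto simp: series_on_def)
  have d0: "d j [] \<noteq> 0" if "j \<in> {1..m}" for j using assms(4) that by (auto simp: purely_improper_def)
  have g0: "g j [] \<noteq> 0" if j: "j \<in> {1..m}" for j
  proof -
    have "{eta. length eta \<le> length ([]::nat list) \<and> set eta \<subseteq> {0..q}} = {[]}" by auto
    then have "g j [] = shuffle_inv (d j) []" using j by (simp add: g_def comp_ser_def one_ser_def)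
    then show ?thesis using shuffle_inv_Nil[of "d j", OF d0[OF j]] by auto
  qed
  have gS: "set a \<subseteq> {0..m}" if "j \<in> {1..m}" "g j a \<noteq> 0" for j a
    using that comp_out[where c=c and m=m and q=q and a="shuffle_inv (d j)" and w=a] cS
    by (auto simp: g_def split: if_splits)
  have SS: "set eta \<subseteq> {0..m}" if "i \<in> {1..m}" "shuffle_inv (g i) eta \<noteq> 0" for i eta
    using shuffle_inv_support[of "g i" "{0..m}" eta] g0 gS that by blast
  have hP: "series_on m m h \<and> (\<forall>i\<in>{1..m}. h i = mixed_comp (shuffle_inv (g i)) h)"
    unfolding h_def by (rule comp_inv_prop) (use SS in blast)
  define u where "u = (\<lambda>j. v j * CF m (h j) v)"
  define ys where "ys = (\<lambda>i. CF m (fb_product m q c d i) v)"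
  have ys: "ys i = CF m (c i) u" for i by (simp add: ys_def fb u_def mixed_CF)
  have z: "CF m (h j) v = CF q (d j) ys" if j: "j \<in> {1..m}" for j
  proof -
    have "h j = mixed_comp (shuffle_inv (g j)) h" using hP j by blast
    then have z1: "CF m (h j) v = CF m (shuffle_inv (g j)) u" by (simp add: mixed_CF u_def)
    have "CF m (g j) u = CF q (shuffle_inv (d j)) (\<lambda>i. CF m (c i) u)"
      using j by (simp add: g_def comp_CF)
    also have "(\<lambda>i. CF m (c i) u) = ys" using ys by (simp add: fun_eq_iff)
    finally have z2: "CF m (g j) u = CF q (shuffle_inv (d j)) ys" .
    have a1: "CF m (g j) u * CF m (shuffle_inv (g j)) u = 1" by (rule CF_shuffle_inv[of "g j", OF g0[OF j]])
    have a2: "CF q (d j) ys * CF q (shuffle_inv (d j)) ys = 1" by (rule CF_shuffle_inv[of "d j", OF d0[OF j]])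
    have "CF q (d j) ys = CF q (d j) ys * (CF m (g j) u * CF m (shuffle_inv (g j)) u)" using a1 by simp
    also have "\<dots> = (CF q (d j) ys * CF q (shuffle_inv (d j)) ys) * CF m (shuffle_inv (g j)) u"
      using z2 by (simp add: mult.assoc)
    also have "\<dots> = CF m (shuffle_inv (g j)) u" using a2 by simp
    finally show ?thesis using z1 by simp
  qed
  have ysol: "\<forall>i\<in>{1..q}. ys i = CF m (c i) (\<lambda>j. v j * CF q (d j) ys)"
  proof
    fix i assume "i \<in> {1..q}"
    have "CF m (c i) (\<lambda>j. v j * CF q (d j) ys) = CF m (c i) u"
      by (rule CF_cong) (simp add: u_def z)
    then show "ys i = CF m (c i) (\<lambda>j. v j * CF q (d j) ys)" using ys by simp
  qed
  show "(\<forall>i\<in>{1..q}. y i = CF m (c i) (\<lambda>j. v j * CF q (d j) y))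
           \<longleftrightarrow> (\<forall>i\<in>{1..q}. y i = CF m (fb_product m q c d i) v)"
  proof
    assume "\<forall>i\<in>{1..q}. y i = CF m (c i) (\<lambda>j. v j * CF q (d j) y)"
    then have "\<forall>i\<in>{1..q}. y i = ys i" using loop_unique ysol by blast
    then show "\<forall>i\<in>{1..q}. y i = CF m (fb_product m q c d i) v" by (simp add: ys_def)
  next
    assume a: "\<forall>i\<in>{1..q}. y i = CF m (fb_product m q c d i) v"
    then have yy: "\<forall>i\<in>{1..q}. y i = ys i" by (simp add: ys_def)
    show "\<forall>i\<in>{1..q}. y i = CF m (c i) (\<lambda>j. v j * CF q (d j) y)"
    proof
      fix i assume i: "i \<in> {1..q}"
      have "CF q (d j) y = CF q (d j) ys" for j by (rule CF_cong) (use yy in auto)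
      then show "y i = CF m (c i) (\<lambda>j. v j * CF q (d j) y)" using ysol yy i by simp
    qed
  qed
qed

end
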